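(* Let $X=\{a_1,\dots,a_\ell\}$ be a finite set of $\ell$ distinct points, $N\ge2$, $\lambda_*\in\mathcal{P}(X)$, and let $\gamma$ be a probability measure on $X^N$. The following are equivalent: (i) $\gamma=\sum_{\nu=1}^\ell\alpha^{(\nu)}S(\delta_{T_1(a_\nu)}\otimes\cdots\otimes\delta_{T_N(a_\nu)})$ for some maps $T_1,\dots,T_N:X\to X$ and some $\alpha^{(1)},\dots,\alpha^{(\ell)}\ge0$ satisfying $\sum_{\nu=1}^\ell\lambda^{(\nu)}_i\alpha^{(\nu)}=(\lambda_* )_i$ for $i=1,\dots,\ell$, where $\lambda^{(\nu)}=\frac1N\sum_{k=1}^N\delta_{T_k(a_\nu)}$, i.e. $\lambda^{(\nu)}_i=\frac1N\#\{k:T_k(a_\nu)=a_i\}$; (ii) $\gamma=\sum_{\nu=1}^\ell\alpha^{(\nu)}\psi_N(\lambda^{(\nu)})$ for some $\lambda^{(1)},\dots,\lambda^{(\ell)}\in\mathcal{P}_{\frac1N}(X)$ and some $\alpha^{(1)},\dots,\alpha^{(\ell)}\ge0$ satisfying $\sum_{\nu=1}^\ell\lambda^{(\nu)}_i\alpha^{(\nu)}=(\lambda_* )_i$ for $i=1,\dots,\ell$. Moreover, if $\gamma$ is of form (i), then it is of form (ii) with the same $\lambda^{(\nu)}$ and $\alpha^{(\nu)}$; in particular $\gamma$ depends on $T_1,\dots,T_N$ only through the $\lambda^{(\nu)}$. Conversely, if $\gamma$ is of form (ii), then it is of form (i) with the same $\lambda^{(\nu)}$ and $\alpha^{(\nu)}$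 and with $T_1,\dots,T_N$ any maps $X\to X$ satisfying $\lambda^{(\nu)}=\frac1N\sum_{k=1}^N\delta_{T_k(a_\nu)}$ for all $\nu$.
   Context: $\mathcal{P}(X)$ denotes probability measures on $X$, identified with vectors $(\lambda_i)$, $\lambda_i=\lambda(\{a_i\})$; $\mathcal{P}_{\frac1N}(X)=\{\lambda\in\mathcal{P}(X):\lambda_i\in\frac1N\mathbb{Z}\ \forall i\}$. The symmetrization operator is $(S\gamma)(A_1\times\cdots\times A_N)=\frac1{N!}\sum_{\sigma\in S_N}\gamma(A_{\sigma(1)}\times\cdots\times A_{\sigma(N)})$. For $\lambda\in\mathcal{P}_{\frac1N}(X)$, $\psi_N(\lambda)=S(\delta_{a_{i_1}}\otimes\cdots\otimes\delta_{a_{i_N}})$ where $i_1\le\dots\le i_N$ is the nondecreasing index sequence in which each $i$ appears exactly $N\lambda_i$ times. *)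

theory Defs
  imports "HOL-Analysis.Analysis"
begin

text \<open>Setting: X = {a 1, ..., a l} with a injective on {1..l}.
  Measures on X are identified with vectors indexed by {1..l} (type nat => real);
  measures on X^N are given by their point masses on lists of length N
  (type 'a list => real).\<close>

definition prob_vec :: "nat \<Rightarrow> (nat \<Rightarrow> real) \<Rightarrow> bool" where
  "prob_vec l lam \<longleftrightarrow> (\<forall>i\<in>{1..l}. lam i \<ge> 0) \<and> (\<Sum>i=1..l. lam i) = 1"

definition prob_vec_N :: "nat \<Rightarrow> nat \<Rightarrow> (nat \<Rightarrow> real) \<Rightarrow> bool" where
  "prob_vec_N l N lam \<longleftrightarrow> prob_vec l lam \<and> (\<forall>i\<in>{1..l}. \<exists>k::int. lam i = of_int k / real N)"

definition XN :: "(nat \<Rightarrow> 'a) \<Rightarrow> nat \<Rightarrow> nat \<Rightarrow> 'a list set" where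
  "XN a l N = {xs. length xs = N \<and> set xs \<subseteq> a ` {1..l}}"

definition prob_on_XN :: "(nat \<Rightarrow> 'a) \<Rightarrow> nat \<Rightarrow> nat \<Rightarrow> ('a list \<Rightarrow> real) \<Rightarrow> bool" where
  "prob_on_XN a l N g \<longleftrightarrow> (\<forall>xs. g xs \<ge> 0) \<and> (\<forall>xs. xs \<notin> XN a l N \<longrightarrow> g xs = 0)
     \<and> (\<Sum>xs\<in>XN a l N. g xs) = 1"

definition dirac_prod :: "'a list \<Rightarrow> 'a list \<Rightarrow> real" where
  "dirac_prod xs = (\<lambda>ys. if ys = xs then 1 else 0)"

definition symmetrize :: "nat \<Rightarrow> ('a list \<Rightarrow> real) \<Rightarrow> 'a list \<Rightarrow> real" where
  "symmetrize N g ys = (if length ys = N then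
     (1 / fact N) * (\<Sum>\<sigma>\<in>{\<sigma>. \<sigma> permutes {0..<N}}. g (map (\<lambda>j. ys ! \<sigma> j) [0..<N]))
   else 0)"

definition index_seq :: "nat \<Rightarrow> nat \<Rightarrow> (nat \<Rightarrow> real) \<Rightarrow> nat list" where
  "index_seq l N lam = concat (map (\<lambda>i. replicate (nat \<lfloor>real N * lam i\<rfloor>) i) [1..<l+1])"

definition psi :: "(nat \<Rightarrow> 'a) \<Rightarrow> nat \<Rightarrow> nat \<Rightarrow> (nat \<Rightarrow> real) \<Rightarrow> 'a list \<Rightarrow> real" where
  "psi a l N lam = symmetrize N (dirac_prod (map a (index_seq l N lam)))"

definition lam_of :: "(nat \<Rightarrow> 'a) \<Rightarrow> nat \<Rightarrow> (nat \<Rightarrow> 'a \<Rightarrow> 'a) \<Rightarrow> nat \<Rightarrow> nat \<Rightarrow> real" where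
  "lam_of a N T \<nu> i = card {k\<in>{1..N}. T k (a \<nu>) = a i} / real N"

definition is_form_i :: "(nat \<Rightarrow> 'a) \<Rightarrow> nat \<Rightarrow> nat \<Rightarrow> (nat \<Rightarrow> real) \<Rightarrow> ('a list \<Rightarrow> real)
    \<Rightarrow> (nat \<Rightarrow> 'a \<Rightarrow> 'a) \<Rightarrow> (nat \<Rightarrow> real) \<Rightarrow> bool" where
  "is_form_i a l N lstar g T \<alpha> \<longleftrightarrow>
     (\<forall>k\<in>{1..N}. \<forall>x\<in>a ` {1..l}. T k x \<in> a ` {1..l}) \<and>
     (\<forall>\<nu>\<in>{1..l}. \<alpha> \<nu> \<ge> 0) \<and>
     (\<forall>i\<in>{1..l}. (\<Sum>\<nu>=1..l. lam_of a N T \<nu> i * \<alpha> \<nu>) = lstar i) \<and>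
     g = (\<lambda>ys. \<Sum>\<nu>=1..l. \<alpha> \<nu> * symmetrize N (dirac_prod (map (\<lambda>k. T k (a \<nu>)) [1..<N+1])) ys)"

definition is_form_ii :: "(nat \<Rightarrow> 'a) \<Rightarrow> nat \<Rightarrow> nat \<Rightarrow> (nat \<Rightarrow> real) \<Rightarrow> ('a list \<Rightarrow> real)
    \<Rightarrow> (nat \<Rightarrow> nat \<Rightarrow> real) \<Rightarrow> (nat \<Rightarrow> real) \<Rightarrow> bool" where
  "is_form_ii a l N lstar g lam \<alpha> \<longleftrightarrow>
     (\<forall>\<nu>\<in>{1..l}. prob_vec_N l N (lam \<nu>)) \<and>
     (\<forall>\<nu>\<in>{1..l}. \<alpha> \<nu> \<ge> 0) \<and>
     (\<forall>i\<in>{1..l}. (\<Sum>\<nu>=1..l. lam \<nu> i * \<alpha> \<nu>) = lstar i) \<and>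
     g = (\<lambda>ys. \<Sum>\<nu>=1..l. \<alpha> \<nu> * psi a l N (lam \<nu>) ys)"

end

theory Submission
  imports Defs "HOL-Combinatorics.Permutations"
begin

lemma sym_perm:
  assumes p: "p permutes {..<length xs}" and len: "length xs = N"
  shows "symmetrize N (dirac_prod (permute_list p xs)) = symmetrize N (dirac_prod xs)"
proof
  fix ys
  show "symmetrize N (dirac_prod (permute_list p xs)) ys = symmetrize N (dirac_prod xs) ys"
  proof (cases "length ys = N")
    case False then show ?thesis by (simp add: symmetrize_def)
  next
    case True
    have S: "{0..<N} = {..<length xs}" using len by auto
    have q: "inv p permutes {..<length xs}" using permutes_inv[OF p] .
    let ?h = "\<lambda>\<sigma>. dirac_prod xs (map (\<lambda>j. ys ! \<sigma> j) [0..<N])"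
    have eq: "dirac_prod (permute_list p xs) (map (\<lambda>j. ys ! \<sigma> j) [0..<N]) = ?h (\<sigma> \<circ> inv p)" for \<sigma>
    proof -
      have "(map (\<lambda>j. ys ! \<sigma> j) [0..<N] = permute_list p xs) \<longleftrightarrow>
            (map (\<lambda>j. ys ! (\<sigma> \<circ> inv p) j) [0..<N] = xs)"
      proof -
        have "(map (\<lambda>j. ys ! \<sigma> j) [0..<N] = permute_list p xs) \<longleftrightarrow> (\<forall>j<N. ys ! \<sigma> j = xs ! p j)"
          using len p by (auto simp: list_eq_iff_nth_eq permute_list_nth)
        also have "\<dots> \<longleftrightarrow> (\<forall>i<N. ys ! \<sigma> (inv p i) = xs ! i)"
        proof
          assume A: "\<forall>j<N. ys ! \<sigma> j = xs ! p j"
          show "\<forall>i<N. ys ! \<sigma> (inv p i) = xs ! i"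
          proof (intro allI impI)
            fix i assume "i < N"
            then have "inv p i < N" using permutes_in_image[OF q] len by auto
            then show "ys ! \<sigma> (inv p i) = xs ! i" using A permutes_inverses(1)[OF p] by metis
          qed
        next
          assume A: "\<forall>i<N. ys ! \<sigma> (inv p i) = xs ! i"
          show "\<forall>j<N. ys ! \<sigma> j = xs ! p j"
          proof (intro allI impI)
            fix j assume "j < N"
            then have "p j < N" using permutes_in_image[OF p] len by auto
            then show "ys ! \<sigma> j = xs ! p j" using A permutes_inverses(2)[OF p] by metis
          qed
        qed
        also have "\<dots> \<longleftrightarrow> (map (\<lambda>j. ys ! (\<sigma> \<circ> inv p) j) [0..<N] = xs)"
          using len by (auto simp: list_eq_iff_nth_eq)
        finally show ?thesis .
      qed
      then show ?thesis by (simp add: dirac_prod_def)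
    qed
    have "(\<Sum>\<sigma>\<in>{\<sigma>. \<sigma> permutes {0..<N}}. dirac_prod (permute_list p xs) (map (\<lambda>j. ys ! \<sigma> j) [0..<N]))
        = (\<Sum>\<sigma>\<in>{\<sigma>. \<sigma> permutes {0..<N}}. ?h (\<sigma> \<circ> inv p))" by (simp add: eq)
    also have "\<dots> = (\<Sum>\<sigma>\<in>{\<sigma>. \<sigma> permutes {0..<N}}. ?h \<sigma>)"
      using sum_permutations_compose_right[OF q[folded S], of ?h] by simp
    finally show ?thesis using True by (simp add: symmetrize_def)
  qed
qed

lemma sym_mset:
  assumes "mset xs = mset ys" "length ys = N"
  shows "symmetrize N (dirac_prod xs) = symmetrize N (dirac_prod ys)"
proof -
  obtain p where p: "p permutes {..<length ys}" "permute_list p ys = xs"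
    using mset_eq_permutation[OF assms(1)] by blast
  show ?thesis using sym_perm[OF p(1) assms(2)] p(2) by simp
qed

lemma index_seq_Suc: "index_seq (Suc l) N lam = index_seq l N lam @ replicate (nat \<lfloor>real N * lam (Suc l)\<rfloor>) (Suc l)"
  by (simp add: index_seq_def)

lemma set_index_seq: "set (index_seq l N lam) \<subseteq> {1..l}"
  by (induction l) (auto simp: index_seq_Suc, auto simp: index_seq_def)

lemma count_index_seq: "i \<in> {1..l} \<Longrightarrow> count (mset (index_seq l N lam)) i = nat \<lfloor>real N * lam i\<rfloor>"
proof (induction l)
  case 0 then show ?case by simp
next
  case (Suc l)
  have "i \<notin> set (index_seq l N lam)" if "i = Suc l" using set_index_seq[of l N lam] that by auto
  then show ?case using Suc by (cases "i = Suc l") (auto simp: index_seq_Suc count_eq_zero_iff)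
qed

lemma length_index_seq: "length (index_seq l N lam) = (\<Sum>i=1..l. nat \<lfloor>real N * lam i\<rfloor>)"
  by (induction l) (auto simp: index_seq_Suc, simp add: index_seq_def)

lemma index_seq_cong: "(\<forall>i\<in>{1..l}. lam i = lam' i) \<Longrightarrow> index_seq l N lam = index_seq l N lam'"
  unfolding index_seq_def by (intro arg_cong[where f=concat] map_cong) auto

lemma sum_single_count: "(\<Sum>z\<in>{i} \<inter> set_mset M. count M z) = count M i"
proof (cases "i \<in># M")
  case True then have "{i} \<inter> set_mset M = {i}" by auto
  then show ?thesis by simp
next
  case False then have "{i} \<inter> set_mset M = {}" by auto
  then show ?thesis using False by (simp add: count_eq_zero_iff)
qed

lemma mset_T:
  assumes inj: "inj_on a {1..l}" and N: "N > 0" and Tin: "\<forall>k\<in>{1..N}. T k x \<in> a ` {1..l}"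
  shows "mset (map (\<lambda>k. T k x) [1..<N+1]) = mset (map a (index_seq l N (\<lambda>i. real (card {k\<in>{1..N}. T k x = a i}) / real N)))"
    (is "mset ?L = mset (map a ?I)")
proof (rule multiset_eqI)
  fix y
  show "count (mset ?L) y = count (mset (map a ?I)) y"
  proof (cases "y \<in> a ` {1..l}")
    case False
    then have "y \<notin> set ?L" using Tin by auto
    moreover have "y \<notin> set (map a ?I)" using False set_index_seq by fastforce
    ultimately have "count (mset ?L) y = 0" "count (mset (map a ?I)) y = 0"
      by (simp_all only: count_mset_0_iff not_False_eq_True)
    then show ?thesis by simp
  next
    case True
    then obtain i where i: "i \<in> {1..l}" "y = a i" by auto
    have "count (mset ?L) y = length (filter ((=) y) ?L)" by (simp only: count_mset count_list_eq_length_filter)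
    also have "\<dots> = length (filter (\<lambda>k. T k x = y) [1..<N+1])" by (simp add: filter_map o_def eq_commute)
    also have "\<dots> = card {k\<in>{1..N}. T k x = y}"
      by (subst distinct_length_filter) (auto intro!: arg_cong[where f=card])
    finally have L: "count (mset ?L) y = card {k\<in>{1..N}. T k x = a i}" using i by simp
    have "count (mset (map a ?I)) y = count (mset ?I) i"
    proof -
      have "count (mset (map a ?I)) y = count (image_mset a (mset ?I)) (a i)" using i by simp
      also have "\<dots> = (\<Sum>z\<in>a -` {a i} \<inter> set_mset (mset ?I). count (mset ?I) z)"
        by (rule count_image_mset)
      also have "a -` {a i} \<inter> set_mset (mset ?I) = {i} \<inter> set_mset (mset ?I)"
        using inj set_index_seq[of l N "\<lambda>i. real (card {k\<in>{1..N}. T k x = a i}) / real N"] i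
        by (auto simp del: atLeastAtMost_iff dest: inj_onD)
      also have "(\<Sum>z\<in>{i} \<inter> set_mset (mset ?I). count (mset ?I) z) = count (mset ?I) i"
        by (rule sum_single_count)
      finally show ?thesis .
    qed
    also have "\<dots> = nat \<lfloor>real N * (real (card {k\<in>{1..N}. T k x = a i}) / real N)\<rfloor>"
      by (rule count_index_seq[OF i(1)])
    also have "\<dots> = card {k\<in>{1..N}. T k x = a i}" using N by simp
    finally show ?thesis using L by simp
  qed
qed

lemma count_map_a:
  assumes "inj_on a {1..l}" "set xs \<subseteq> {1..l}" "i \<in> {1..l}"
  shows "count (mset (map a xs)) (a i) = count (mset xs) i"
proof -
  have "count (mset (map a xs)) (a i) = count (image_mset a (mset xs)) (a i)" by simp
  also have "\<dots> = (\<Sum>z\<in>a -` {a i} \<inter> set_mset (mset xs). count (mset xs) z)"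
    by (rule count_image_mset)
  also have "a -` {a i} \<inter> set_mset (mset xs) = {i} \<inter> set_mset (mset xs)"
    using assms by (auto simp del: atLeastAtMost_iff dest: inj_onD)
  also have "(\<Sum>z\<in>{i} \<inter> set_mset (mset xs). count (mset xs) z) = count (mset xs) i"
    by (rule sum_single_count)
  finally show ?thesis .
qed

lemma count_T: "count (mset (map (\<lambda>k. T k x) [1..<N+1])) y = card {k\<in>{1..N}. T k x = y}"
proof -
  have "count (mset (map (\<lambda>k. T k x) [1..<N+1])) y = length (filter ((=) y) (map (\<lambda>k. T k x) [1..<N+1]))"
    by (simp only: count_mset count_list_eq_length_filter)
  also have "\<dots> = length (filter (\<lambda>k. T k x = y) [1..<N+1])" by (simp add: filter_map o_def eq_commute)
  also have "\<dots> = card {k\<in>{1..N}. T k x = y}"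
    by (subst distinct_length_filter) (auto intro!: arg_cong[where f=card])
  finally show ?thesis .
qed

lemma int_lam:
  assumes "prob_vec_N l N lam" "N > 0" "i \<in> {1..l}"
  shows "real (nat \<lfloor>real N * lam i\<rfloor>) = real N * lam i"
proof -
  obtain k :: int where k: "lam i = of_int k / real N" using assms unfolding prob_vec_N_def by blast
  have "lam i \<ge> 0" using assms unfolding prob_vec_N_def prob_vec_def by blast
  then have "k \<ge> 0" using k assms(2) by (simp add: divide_nonneg_pos zero_le_divide_iff)
  have "real N * lam i = of_int k" using k assms(2) by simp
  then show ?thesis using \<open>k \<ge> 0\<close> by simp
qed

lemma length_idx:
  assumes "prob_vec_N l N lam" "N > 0"
  shows "length (index_seq l N lam) = N"
proof -
  have "real (length (index_seq l N lam)) = (\<Sum>i=1..l. real (nat \<lfloor>real N * lam i\<rfloor>))"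
    by (simp add: length_index_seq)
  also have "\<dots> = (\<Sum>i=1..l. real N * lam i)" using int_lam[OF assms] by (intro sum.cong) auto
  also have "\<dots> = real N" using assms(1) by (simp add: prob_vec_N_def prob_vec_def flip: sum_distrib_left)
  finally show ?thesis by linarith
qed

lemma card_sum_ind: "finite A \<Longrightarrow> real (card {k\<in>A. P k}) = (\<Sum>k\<in>A. if P k then 1 else 0)"
  by (simp add: sum.inter_filter[symmetric])

lemma probN_lam_of:
  assumes inj: "inj_on a {1..l}" and N: "N > 0" and Tin: "\<forall>k\<in>{1..N}. T k x \<in> a ` {1..l}"
  shows "prob_vec_N l N (\<lambda>i. real (card {k\<in>{1..N}. T k x = a i}) / real N)"
proof -
  have "(\<Sum>i=1..l. real (card {k\<in>{1..N}. T k x = a i})) = (\<Sum>i=1..l. \<Sum>k=1..N. if T k x = a i then 1 else 0)"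
    by (intro sum.cong refl card_sum_ind) simp
  also have "\<dots> = (\<Sum>k=1..N. \<Sum>i=1..l. if T k x = a i then 1 else 0)" by (rule sum.swap)
  also have "\<dots> = (\<Sum>k=1..N. 1)"
  proof (rule sum.cong[OF refl])
    fix k assume "k \<in> {1..N}"
    then obtain j where j: "j \<in> {1..l}" "T k x = a j" using Tin by blast
    have "{i\<in>{1..l}. T k x = a i} = {j}" using j inj by (auto dest: inj_onD)
    then have "real (card {i\<in>{1..l}. T k x = a i}) = 1" by simp
    then show "(\<Sum>i=1..l. if T k x = a i then 1 else 0) = (1::real)"
      using card_sum_ind[of "{1..l}" "\<lambda>i. T k x = a i"] by simp
  qed
  also have "\<dots> = real N" by simp
  finally have S: "(\<Sum>i=1..l. real (card {k\<in>{1..N}. T k x = a i})) = real N" .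
  show ?thesis unfolding prob_vec_N_def prob_vec_def
  proof (intro conjI ballI)
    show "(\<Sum>i=1..l. real (card {k\<in>{1..N}. T k x = a i}) / real N) = 1"
      using S N by (simp flip: sum_divide_distrib)
  next
    fix i show "\<exists>k::int. real (card {k\<in>{1..N}. T k x = a i}) / real N = of_int k / real N"
      by (rule exI[of _ "int (card {k\<in>{1..N}. T k x = a i})"]) simp
  qed simp
qed

lemma lam_of_eq: "lam_of a N T \<nu> = (\<lambda>i. real (card {k\<in>{1..N}. T k (a \<nu>) = a i}) / real N)"
  by (simp add: lam_of_def fun_eq_iff)

lemma sym_T_psi:
  assumes inj: "inj_on a {1..l}" and N: "N > 0" and Tin: "\<forall>k\<in>{1..N}. T k (a \<nu>) \<in> a ` {1..l}"
  shows "symmetrize N (dirac_prod (map (\<lambda>k. T k (a \<nu>)) [1..<N+1])) = psi a l N (lam_of a N T \<nu>)"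
  unfolding psi_def lam_of_eq
  by (rule sym_mset[OF mset_T[of a l N T "a \<nu>", OF inj N Tin]])
     (simp only: length_map length_idx[OF probN_lam_of[of a l N T "a \<nu>", OF inj N Tin] N])

lemma i_to_ii:
  assumes inj: "inj_on a {1..l}" and N: "N > 0" and F: "is_form_i a l N lstar g T \<alpha>"
  shows "is_form_ii a l N lstar g (lam_of a N T) \<alpha>"
proof -
  have Tin: "\<forall>k\<in>{1..N}. T k (a \<nu>) \<in> a ` {1..l}" if "\<nu> \<in> {1..l}" for \<nu>
    using F that unfolding is_form_i_def by blast
  show ?thesis unfolding is_form_ii_def
  proof (intro conjI)
    show "\<forall>\<nu>\<in>{1..l}. prob_vec_N l N (lam_of a N T \<nu>)"
      using probN_lam_of[of a l N T "a _", OF inj N Tin] by (simp add: lam_of_eq)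
    show "g = (\<lambda>ys. \<Sum>\<nu>=1..l. \<alpha> \<nu> * psi a l N (lam_of a N T \<nu>) ys)"
      using F sym_T_psi[of a l N T, OF inj N Tin] unfolding is_form_i_def
      by (auto intro!: ext sum.cong)
  qed (use F in \<open>auto simp: is_form_i_def\<close>)
qed

lemma ii_to_i:
  assumes inj: "inj_on a {1..l}" and N: "N > 0" and F: "is_form_ii a l N lstar g lam \<alpha>"
    and Tin0: "\<forall>k\<in>{1..N}. \<forall>x\<in>a ` {1..l}. T k x \<in> a ` {1..l}"
    and L: "\<forall>\<nu>\<in>{1..l}. \<forall>i\<in>{1..l}. lam \<nu> i = lam_of a N T \<nu> i"
  shows "is_form_i a l N lstar g T \<alpha>"
proof -
  have Tin: "\<forall>k\<in>{1..N}. T k (a \<nu>) \<in> a ` {1..l}" if "\<nu> \<in> {1..l}" for \<nu>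
    using Tin0 that by blast
  have P: "psi a l N (lam \<nu>) = symmetrize N (dirac_prod (map (\<lambda>k. T k (a \<nu>)) [1..<N+1]))"
    if "\<nu> \<in> {1..l}" for \<nu>
  proof -
    have "index_seq l N (lam \<nu>) = index_seq l N (lam_of a N T \<nu>)"
      using L that by (intro index_seq_cong) auto
    then have "psi a l N (lam \<nu>) = psi a l N (lam_of a N T \<nu>)" by (simp add: psi_def)
    then show ?thesis using sym_T_psi[of a l N T \<nu>, OF inj N Tin[OF that]] by simp
  qed
  show ?thesis unfolding is_form_i_def
  proof (intro conjI)
    show "\<forall>i\<in>{1..l}. (\<Sum>\<nu>=1..l. lam_of a N T \<nu> i * \<alpha> \<nu>) = lstar i"
      using F L unfolding is_form_ii_def by (metis (no_types, lifting) sum.cong)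
    show "g = (\<lambda>ys. \<Sum>\<nu>=1..l. \<alpha> \<nu> * symmetrize N (dirac_prod (map (\<lambda>k. T k (a \<nu>)) [1..<N+1])) ys)"
      using F P unfolding is_form_ii_def by (auto intro!: ext sum.cong)
  qed (use F Tin0 in \<open>auto simp: is_form_ii_def\<close>)
qed

lemma exists_T:
  assumes inj: "inj_on a {1..l}" and N: "N > 0" and PV: "\<forall>\<nu>\<in>{1..l}. prob_vec_N l N (lam \<nu>)"
  shows "\<exists>T. (\<forall>k\<in>{1..N}. \<forall>x\<in>a ` {1..l}. T k x \<in> a ` {1..l})
          \<and> (\<forall>\<nu>\<in>{1..l}. \<forall>i\<in>{1..l}. lam \<nu> i = lam_of a N T \<nu> i)"
proof -
  define idx where "idx \<nu> = index_seq l N (lam \<nu>)" for \<nu>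
  define T where "T k x = (if x \<in> a ` {1..l} then a (idx (inv_into {1..l} a x) ! (k - 1)) else x)" for k x
  have len: "length (idx \<nu>) = N" if "\<nu> \<in> {1..l}" for \<nu>
    using length_idx[OF PV[rule_format, OF that] N] by (simp add: idx_def)
  have setI: "set (idx \<nu>) \<subseteq> {1..l}" for \<nu> using set_index_seq by (simp add: idx_def)
  have Ta: "T k (a \<nu>) = a (idx \<nu> ! (k - 1))" if "\<nu> \<in> {1..l}" for k \<nu>
    using inj that by (simp add: T_def)
  have mapT: "map (\<lambda>k. T k (a \<nu>)) [1..<N+1] = map a (idx \<nu>)" if "\<nu> \<in> {1..l}" for \<nu>
    using len[OF that] Ta[OF that] by (auto simp: list_eq_iff_nth_eq nth_upt simp del: upt_Suc)
  show ?thesis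
  proof (intro exI conjI ballI)
    fix k x assume k: "k \<in> {1..N}" and x: "x \<in> a ` {1..l}"
    then obtain \<nu> where \<nu>: "\<nu> \<in> {1..l}" "x = a \<nu>" by blast
    have "idx \<nu> ! (k - 1) \<in> set (idx \<nu>)" using k len[OF \<nu>(1)] by auto
    then show "T k x \<in> a ` {1..l}" using Ta[OF \<nu>(1)] \<nu> setI by blast
  next
    fix \<nu> i assume \<nu>: "\<nu> \<in> {1..l}" and i: "i \<in> {1..l}"
    have "card {k\<in>{1..N}. T k (a \<nu>) = a i} = count (mset (map (\<lambda>k. T k (a \<nu>)) [1..<N+1])) (a i)"
      by (simp only: count_T)
    also have "\<dots> = count (mset (map a (idx \<nu>))) (a i)" by (simp only: mapT[OF \<nu>])
    also have "\<dots> = count (mset (idx \<nu>)) i" by (rule count_map_a[OF inj setI i])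
    also have "\<dots> = nat \<lfloor>real N * lam \<nu> i\<rfloor>" unfolding idx_def by (rule count_index_seq[OF i])
    finally have "real (card {k\<in>{1..N}. T k (a \<nu>) = a i}) = real N * lam \<nu> i"
      using int_lam[OF PV[rule_format, OF \<nu>] N i] by simp
    then show "lam \<nu> i = lam_of a N T \<nu> i" using N by (simp add: lam_of_def)
  qed
qed

theorem proposition5p2:
  fixes a :: "nat \<Rightarrow> 'a" and l N :: nat and lstar :: "nat \<Rightarrow> real" and g :: "'a list \<Rightarrow> real"
  assumes "inj_on a {1..l}" and "N \<ge> 2" and "prob_vec l lstar" and "prob_on_XN a l N g"
  shows "((\<exists>T \<alpha>. is_form_i a l N lstar g T \<alpha>) \<longleftrightarrow> (\<exists>lam \<alpha>. is_form_ii a l N lstar g lam \<alpha>))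
    \<and> (\<forall>T \<alpha>. is_form_i a l N lstar g T \<alpha> \<longrightarrow> is_form_ii a l N lstar g (lam_of a N T) \<alpha>)
    \<and> (\<forall>lam \<alpha> T. is_form_ii a l N lstar g lam \<alpha>
          \<and> (\<forall>k\<in>{1..N}. \<forall>x\<in>a ` {1..l}. T k x \<in> a ` {1..l})
          \<and> (\<forall>\<nu>\<in>{1..l}. \<forall>i\<in>{1..l}. lam \<nu> i = lam_of a N T \<nu> i)
        \<longrightarrow> is_form_i a l N lstar g T \<alpha>)"
proof -
  have inj: "inj_on a {1..l}" and N: "N > 0" using assms by auto
  have A: "\<forall>T \<alpha>. is_form_i a l N lstar g T \<alpha> \<longrightarrow> is_form_ii a l N lstar g (lam_of a N T) \<alpha>"
    using i_to_ii[OF inj N] by blast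
  have B: "\<forall>lam \<alpha> T. is_form_ii a l N lstar g lam \<alpha>
          \<and> (\<forall>k\<in>{1..N}. \<forall>x\<in>a ` {1..l}. T k x \<in> a ` {1..l})
          \<and> (\<forall>\<nu>\<in>{1..l}. \<forall>i\<in>{1..l}. lam \<nu> i = lam_of a N T \<nu> i)
        \<longrightarrow> is_form_i a l N lstar g T \<alpha>"
    using ii_to_i[OF inj N] by blast
  have C: "(\<exists>lam \<alpha>. is_form_ii a l N lstar g lam \<alpha>) \<Longrightarrow> (\<exists>T \<alpha>. is_form_i a l N lstar g T \<alpha>)"
  proof -
    assume "\<exists>lam \<alpha>. is_form_ii a l N lstar g lam \<alpha>"
    then obtain lam \<alpha> where F: "is_form_ii a l N lstar g lam \<alpha>" by blast
    then have "\<forall>\<nu>\<in>{1..l}. prob_vec_N l N (lam \<nu>)" by (simp add: is_form_ii_def)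
    then obtain T where "(\<forall>k\<in>{1..N}. \<forall>x\<in>a ` {1..l}. T k x \<in> a ` {1..l})"
          "(\<forall>\<nu>\<in>{1..l}. \<forall>i\<in>{1..l}. lam \<nu> i = lam_of a N T \<nu> i)"
      using exists_T[OF inj N] by blast
    then show ?thesis using B F by blast
  qed
  show ?thesis using A B C by blast
qed

end
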